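(* If $f\in \mathcal{S}^*_{nc}$, then $$ 0 \leq \det T_{2,1}(f) \leq 1 \quad \text{and} \quad \det T_{3,1}(f) \leq 1.$$ All the estimates are sharp.
   Context: Let $\mathcal{A}$ be the class of analytic functions $f(z)=z+\sum_{n=2}^\infty a_n z^n$ in the unit disk $\mathbb{D}=\{z\in\mathbb{C}:|z|<1\}$. The class $\mathcal{S}^*_{nc}$ consists of all $f\in\mathcal{A}$ such that $\frac{zf'(z)}{f(z)} \prec \frac{1+z}{\cos z}$ in $\mathbb{D}$, where $\prec$ denotes subordination. For $f\in\mathcal{A}$, the Hermitian-Toeplitz determinants are $\det T_{2,1}(f) = 1-|a_2|^2$ and $\det T_{3,1}(f) = 1 - 2|a_2|^2 + 2\,\mathrm{Re}\left(a_2^2\, \overline{a_3}\right) - |a_3|^2$. *)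

theory Defs
  imports "HOL-Analysis.Analysis"
begin

definition subordinate :: "(complex \<Rightarrow> complex) \<Rightarrow> (complex \<Rightarrow> complex) \<Rightarrow> bool" where
  "subordinate g F \<longleftrightarrow>
     (\<exists>w. w holomorphic_on ball 0 1 \<and> w 0 = 0 \<and> (\<forall>z\<in>ball 0 1. norm (w z) < 1) \<and>
          (\<forall>z\<in>ball 0 1. g z = F (w z)))"

definition taylor_coeff :: "(complex \<Rightarrow> complex) \<Rightarrow> nat \<Rightarrow> complex" where
  "taylor_coeff f n = (deriv ^^ n) f 0 / fact n"

definition classA :: "(complex \<Rightarrow> complex) set" where
  "classA = {f. f holomorphic_on ball 0 1 \<and> f 0 = 0 \<and> deriv f 0 = 1}"

text \<open>The class S*_nc: z f'(z)/f(z) (with value 1 at 0) subordinate to (1+z)/cos z.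
  f is required to be non-vanishing on the punctured disk so that z f'/f is analytic.\<close>
definition S_nc :: "(complex \<Rightarrow> complex) set" where
  "S_nc = {f. f \<in> classA \<and> (\<forall>z\<in>ball 0 1. z \<noteq> 0 \<longrightarrow> f z \<noteq> 0) \<and>
              subordinate (\<lambda>z. if z = 0 then 1 else z * deriv f z / f z) (\<lambda>z. (1 + z) / cos z)}"

definition detT21 :: "(complex \<Rightarrow> complex) \<Rightarrow> real" where
  "detT21 f = 1 - (norm (taylor_coeff f 2))\<^sup>2"

definition detT31 :: "(complex \<Rightarrow> complex) \<Rightarrow> real" where
  "detT31 f = 1 - 2 * (norm (taylor_coeff f 2))\<^sup>2
     + 2 * Re ((taylor_coeff f 2)\<^sup>2 * cnj (taylor_coeff f 3)) - (norm (taylor_coeff f 3))\<^sup>2"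

end

theory Submission
  imports Defs "HOL-Complex_Analysis.Complex_Analysis"
begin

lemma cos_nz:
  fixes z :: complex assumes "norm z < 1" shows "cos z \<noteq> 0"
proof
  assume "cos z = 0"
  then obtain n :: int where n: "z = complex_of_real (n * pi) + of_real pi / 2"
    by (auto simp: cos_eq_0)
  have "z = complex_of_real ((real_of_int n + 1/2) * pi)"
    using n by (simp add: algebra_simps)
  then have nz: "norm z = \<bar>real_of_int n + 1/2\<bar> * pi"
    by (simp only: norm_of_real abs_mult) simp
  have "\<bar>real_of_int n + 1/2\<bar> \<ge> 1/2"
  proof (cases "n \<ge> 0")
    case True then show ?thesis by simp
  next
    case False then have "real_of_int n \<le> -1" by simp
    then show ?thesis by simp
  qed
  then have "norm z \<ge> pi / 2" using nz pi_gt_zero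
    by (metis divide_inverse inverse_eq_divide mult.commute mult_right_mono order.strict_implies_order times_divide_eq_right mult_1)
  with assms pi_gt3 show False by simp
qed

lemma F_holo: "(\<lambda>z. (1 + z) / cos z) holomorphic_on ball 0 1"
  by (intro holomorphic_intros) (auto simp: cos_nz)

lemma F_deriv: "((\<lambda>z::complex. (1 + z) / cos z) has_field_derivative 1) (at 0)"
proof -
  have "((\<lambda>z::complex. (1 + z) / cos z) has_field_derivative ((0 + 1) * cos 0 - (1 + 0) * (- sin 0)) / (cos 0 * cos 0)) (at 0)"
    by (intro derivative_eq_intros) auto
  then show ?thesis by simp
qed

lemma a2_eq:
  assumes "f \<in> S_nc"
  obtains w where "w holomorphic_on ball 0 1" "w 0 = 0" "\<forall>z\<in>ball 0 1. norm (w z) < 1"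
    "taylor_coeff f 2 = deriv w 0"
proof -
  define F where "F = (\<lambda>z::complex. (1 + z) / cos z)"
  have holf: "f holomorphic_on ball 0 1" and f0: "f 0 = 0" and df0: "deriv f 0 = 1"
    using assms by (auto simp: S_nc_def classA_def)
  have fnz: "\<forall>z\<in>ball 0 1. z \<noteq> 0 \<longrightarrow> f z \<noteq> 0" using assms by (auto simp: S_nc_def)
  obtain w where holw: "w holomorphic_on ball 0 1" and w0: "w 0 = 0"
    and wlt: "\<forall>z\<in>ball 0 1. norm (w z) < 1"
    and weq: "\<forall>z\<in>ball 0 1. (if z = 0 then 1 else z * deriv f z / f z) = F (w z)"
    using assms by (auto simp: S_nc_def subordinate_def F_def)
  define p where "p = (\<lambda>z. F (w z))"
  define D where "D = deriv f"
  define D2 where "D2 = deriv D"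
  define p1 where "p1 = deriv p"
  have holp: "p holomorphic_on ball 0 1"
  proof -
    have "(F \<circ> w) holomorphic_on ball 0 1"
      by (rule holomorphic_on_compose_gen[OF holw F_holo[folded F_def]]) (use wlt in auto)
    then show ?thesis by (simp add: p_def o_def)
  qed
  have eq: "p z * f z = z * D z" if "z \<in> ball 0 1" for z
  proof (cases "z = 0")
    case True then show ?thesis by (simp add: f0)
  next
    case False
    then have "z * deriv f z / f z = p z" using weq[rule_format, OF that] False by (simp add: p_def)
    then show ?thesis using fnz that False by (auto simp: D_def field_simps)
  qed
  have holD: "D holomorphic_on ball 0 1" unfolding D_def by (rule holomorphic_deriv[OF holf open_ball])
  have holD2: "D2 holomorphic_on ball 0 1" unfolding D2_def by (rule holomorphic_deriv[OF holD open_ball])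
  have holp1: "p1 holomorphic_on ball 0 1" unfolding p1_def by (rule holomorphic_deriv[OF holp open_ball])
  have E: "p1 z * f z + p z * D z = D z + z * D2 z" if z: "z \<in> ball 0 1" for z
  proof -
    have a: "(f has_field_derivative D z) (at z)" unfolding D_def by (rule holomorphic_derivI[OF holf open_ball z])
    have b: "(p has_field_derivative p1 z) (at z)" unfolding p1_def by (rule holomorphic_derivI[OF holp open_ball z])
    have c: "(D has_field_derivative D2 z) (at z)" unfolding D2_def by (rule holomorphic_derivI[OF holD open_ball z])
    have d1: "((\<lambda>z. p z * f z) has_field_derivative p1 z * f z + p z * D z) (at z)"
      by (rule DERIV_cong[OF DERIV_mult'[OF b a]]) (simp add: algebra_simps)
    have d2: "((\<lambda>z. z * D z) has_field_derivative D z + z * D2 z) (at z)"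
      by (rule DERIV_cong[OF DERIV_mult'[OF DERIV_ident c]]) (simp add: algebra_simps)
    have d1': "((\<lambda>z. z * D z) has_field_derivative p1 z * f z + p z * D z) (at z)"
      by (rule has_field_derivative_transform_within_open[OF d1 open_ball z]) (use eq in auto)
    show ?thesis using DERIV_unique[OF d1' d2] .
  qed
  have z0: "(0::complex) \<in> ball 0 1" by simp
  have a: "(f has_field_derivative D 0) (at 0)" unfolding D_def by (rule holomorphic_derivI[OF holf open_ball z0])
  have b: "(p has_field_derivative p1 0) (at 0)" unfolding p1_def by (rule holomorphic_derivI[OF holp open_ball z0])
  have c: "(D has_field_derivative D2 0) (at 0)" unfolding D2_def by (rule holomorphic_derivI[OF holD open_ball z0])
  have b2: "(p1 has_field_derivative deriv p1 0) (at 0)" by (rule holomorphic_derivI[OF holp1 open_ball z0])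
  have c2: "(D2 has_field_derivative deriv D2 0) (at 0)" by (rule holomorphic_derivI[OF holD2 open_ball z0])
  have e1: "((\<lambda>z. p1 z * f z + p z * D z) has_field_derivative
      (p1 0 * D 0 + deriv p1 0 * f 0) + (p 0 * D2 0 + p1 0 * D 0)) (at 0)"
    by (intro DERIV_add DERIV_mult' b2 a b c)
  have e2: "((\<lambda>z. D z + z * D2 z) has_field_derivative D2 0 + (0 * deriv D2 0 + 1 * D2 0)) (at 0)"
    by (intro DERIV_add DERIV_mult' c c2 DERIV_ident)
  have e1': "((\<lambda>z. D z + z * D2 z) has_field_derivative
      (p1 0 * D 0 + deriv p1 0 * f 0) + (p 0 * D2 0 + p1 0 * D 0)) (at 0)"
    by (rule has_field_derivative_transform_within_open[OF e1 open_ball z0]) (use E in auto)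
  have p0: "p 0 = 1" by (simp add: p_def F_def w0)
  have "(p1 0 * D 0 + deriv p1 0 * f 0) + (p 0 * D2 0 + p1 0 * D 0) = D2 0 + (0 * deriv D2 0 + 1 * D2 0)"
    using DERIV_unique[OF e1' e2] .
  then have key: "D2 0 = 2 * p1 0" using f0 df0 p0 by (simp add: D_def)
  have "(p has_field_derivative 1 * deriv w 0) (at 0)"
    unfolding p_def
    by (rule DERIV_chain2[where f=F]) (use F_deriv holomorphic_derivI[OF holw open_ball z0] w0 in \<open>auto simp: F_def\<close>)
  then have "p1 0 = deriv w 0" unfolding p1_def using DERIV_imp_deriv by force
  moreover have "taylor_coeff f 2 = D2 0 / 2"
    by (simp add: taylor_coeff_def D2_def D_def numeral_2_eq_2)
  ultimately have "taylor_coeff f 2 = deriv w 0" using key by simp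
  then show ?thesis using that holw w0 wlt by blast
qed

lemma extremal: "\<exists>f\<in>S_nc. taylor_coeff f 2 = 1"
proof -
  define F where "F = (\<lambda>z::complex. (1 + z) / cos z)"
  have holF: "F holomorphic_on ball 0 1" using F_holo by (simp add: F_def)
  have F0: "F 0 = 1" by (simp add: F_def)
  have dF0: "deriv F 0 = 1" using DERIV_imp_deriv[OF F_deriv] by (simp add: F_def)
  define h where "h = (\<lambda>z. if z = 0 then deriv F 0 else (F z - F 0) / (z - 0))"
  have holh: "h holomorphic_on ball 0 1" unfolding h_def by (rule pole_lemma_open[OF holF open_ball])
  have h0: "h 0 = 1" by (simp add: h_def dF0)
  have hz: "z * h z = F z - 1" for z by (simp add: h_def F0 dF0)
  obtain g0 where g0: "\<And>x. x \<in> ball 0 1 \<Longrightarrow> (g0 has_field_derivative h x) (at x within ball 0 1)"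
    using holomorphic_convex_primitive'[OF convex_ball open_ball holh] by blast
  define g where "g = (\<lambda>z. g0 z - g0 0)"
  have dg: "(g has_field_derivative h x) (at x)" if "x \<in> ball 0 1" for x
  proof -
    have "(g0 has_field_derivative h x) (at x)" using g0[OF that] at_within_open[OF that open_ball] by simp
    then show ?thesis unfolding g_def by (rule DERIV_cong[OF DERIV_diff[OF _ DERIV_const]]) simp
  qed
  have g00: "g 0 = 0" by (simp add: g_def)
  define f where "f = (\<lambda>z. z * exp (g z))"
  define Df where "Df = (\<lambda>z. exp (g z) * (1 + z * h z))"
  have df: "(f has_field_derivative Df z) (at z)" if "z \<in> ball 0 1" for z
  proof -
    have "(f has_field_derivative (z * (exp (g z) * h z) + 1 * exp (g z))) (at z)"
      unfolding f_def by (intro DERIV_mult' DERIV_ident DERIV_chain2[OF DERIV_exp dg[OF that]])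
    then show ?thesis by (rule DERIV_cong) (simp add: Df_def algebra_simps)
  qed
  have derf: "deriv f z = Df z" if "z \<in> ball 0 1" for z using DERIV_imp_deriv[OF df[OF that]] .
  have holf: "f holomorphic_on ball 0 1"
    using df by (metis holomorphic_on_open[OF open_ball])
  have z0: "(0::complex) \<in> ball 0 1" by simp
  have "f \<in> classA" using holf derf[OF z0] by (simp add: classA_def f_def Df_def g00)
  moreover have "\<forall>z\<in>ball 0 1. z \<noteq> 0 \<longrightarrow> f z \<noteq> 0" by (simp add: f_def)
  moreover have "subordinate (\<lambda>z. if z = 0 then 1 else z * deriv f z / f z) (\<lambda>z. (1 + z) / cos z)"
    unfolding subordinate_def
  proof (intro exI[of _ "\<lambda>z. z"] conjI ballI)
    fix z :: complex assume z: "z \<in> ball 0 1"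
    show "(if z = 0 then 1 else z * deriv f z / f z) = (1 + z) / cos z"
    proof (cases "z = 0")
      case True then show ?thesis by simp
    next
      case False
      have "z * deriv f z / f z = 1 + z * h z"
        using False derf[OF z] by (simp add: Df_def f_def)
      then show ?thesis using False hz[of z] by (simp add: F_def)
    qed
  qed auto
  ultimately have inS: "f \<in> S_nc" by (simp add: S_nc_def)
  have dh0: "(h has_field_derivative deriv h 0) (at 0)" by (rule holomorphic_derivI[OF holh open_ball z0])
  have "(Df has_field_derivative exp (g 0) * (0 + (0 * deriv h 0 + 1 * h 0)) + (exp (g 0) * h 0) * (1 + 0 * h 0)) (at 0)"
    unfolding Df_def by (intro DERIV_mult' DERIV_add DERIV_const DERIV_ident dh0 DERIV_chain2[OF DERIV_exp dg[OF z0]])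
  then have "(Df has_field_derivative 2) (at 0)" by (rule DERIV_cong) (simp add: g00 h0)
  then have "(deriv f has_field_derivative 2) (at 0)"
    by (rule has_field_derivative_transform_within_open[OF _ open_ball z0]) (simp add: derf)
  then have "deriv (deriv f) 0 = 2" by (rule DERIV_imp_deriv)
  then have "taylor_coeff f 2 = 1" by (simp add: taylor_coeff_def numeral_2_eq_2)
  then show ?thesis using inS by blast
qed

lemma ident_in: "(\<lambda>z. z) \<in> S_nc" "taylor_coeff (\<lambda>z. z) 2 = 0" "taylor_coeff (\<lambda>z. z) 3 = 0"
proof -
  have "subordinate (\<lambda>z. if z = 0 then 1 else z * deriv (\<lambda>z. z) z / z) (\<lambda>z. (1 + z) / cos z)"
    unfolding subordinate_def by (intro exI[of _ "\<lambda>z. 0"]) auto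
  then show "(\<lambda>z. z) \<in> S_nc" by (simp add: S_nc_def classA_def)
  show "taylor_coeff (\<lambda>z. z) 2 = 0" "taylor_coeff (\<lambda>z. z) 3 = 0"
    by (simp_all add: taylor_coeff_def numeral_2_eq_2 numeral_3_eq_3 deriv_ident)
qed

lemma T31_le:
  fixes a b :: complex assumes "norm a \<le> 1"
  shows "1 - 2 * (norm a)\<^sup>2 + 2 * Re (a\<^sup>2 * cnj b) - (norm b)\<^sup>2 \<le> 1"
proof -
  have id: "1 - 2 * (norm a)\<^sup>2 + 2 * Re (a\<^sup>2 * cnj b) - (norm b)\<^sup>2
      = (1 - (norm a)\<^sup>2)\<^sup>2 - (norm (b - a\<^sup>2))\<^sup>2"
    unfolding cmod_power2 by (simp add: power2_eq_square algebra_simps)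
  have "0 \<le> (norm a)\<^sup>2" "(norm a)\<^sup>2 \<le> 1" using assms norm_ge_zero by (auto simp: power_le_one)
  then have "(1 - (norm a)\<^sup>2)\<^sup>2 \<le> 1" by (simp add: power_le_one)
  then show ?thesis unfolding id by (smt (verit) zero_le_power2)
qed

theorem mainTheorem6:
  shows "(\<forall>f\<in>S_nc. 0 \<le> detT21 f \<and> detT21 f \<le> 1 \<and> detT31 f \<le> 1) \<and>
         (\<exists>f\<in>S_nc. detT21 f = 0) \<and> (\<exists>f\<in>S_nc. detT21 f = 1) \<and> (\<exists>f\<in>S_nc. detT31 f = 1)"
proof (intro conjI ballI)
  fix f assume f: "f \<in> S_nc"
  obtain w where "w holomorphic_on ball 0 1" "w 0 = 0" "\<forall>z\<in>ball 0 1. norm (w z) < 1"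
    "taylor_coeff f 2 = deriv w 0" using a2_eq[OF f] by blast
  then have a2: "norm (taylor_coeff f 2) \<le> 1"
    using Schwarz_Lemma(2)[of w 0] by auto
  then show "0 \<le> detT21 f" unfolding detT21_def by (simp add: power_le_one)
  show "detT21 f \<le> 1" unfolding detT21_def by simp
  show "detT31 f \<le> 1" unfolding detT31_def by (rule T31_le[OF a2])
next
  obtain f where "f \<in> S_nc" "taylor_coeff f 2 = 1" using extremal by blast
  then show "\<exists>f\<in>S_nc. detT21 f = 0" by (intro bexI[of _ f]) (simp_all add: detT21_def)
  show "\<exists>f\<in>S_nc. detT21 f = 1" using ident_in by (intro bexI[of _ "\<lambda>z. z"]) (simp_all add: detT21_def)
  show "\<exists>f\<in>S_nc. detT31 f = 1" using ident_in by (intro bexI[of _ "\<lambda>z. z"]) (simp_all add: detT31_def)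
qed

end
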